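(* For $k\in\mathbb{N}$ let $A(k)=\dfrac{3^{2k+3}-32k^3-96k^2-88k-27}{4\,(2k+3)!}$. (i) For every $x\in(0,\pi/2)$ and every $n\in\mathbb{N}$, $$\sum_{k=2}^{2n}(-1)^{k+1}A(k)\,x^{2k}<\cos x-\Big(\frac{\sin x}{x}\Big)^{3}<\sum_{k=2}^{2n+1}(-1)^{k+1}A(k)\,x^{2k}.$$ (ii) For every $x\in(0,\pi/2)$ and every $m\in\mathbb{N}$, $$\Big|\cos x-\Big(\frac{\sin x}{x}\Big)^{3}-\sum_{k=1}^{m}(-1)^{k+1}A(k)\,x^{2k}\Big|<A(m+1)\,x^{2m+2}.$$
   Context: $\mathbb{N}=\{1,2,3,\dots\}$. *)

theory Defs
  imports Complex_Main
begin

definition A :: "nat \<Rightarrow> real" where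
  "A k = (3 ^ (2*k+3) - 32 * real k ^ 3 - 96 * real k ^ 2 - 88 * real k - 27)
          / (4 * fact (2*k+3))"

end

theory Submission
  imports Defs
begin

lemma leib_strict:
  fixes b :: "nat \<Rightarrow> real"
  assumes lim: "b \<longlonglongrightarrow> 0" and pos: "\<And>n. 0 < b n" and dec: "\<And>n. b (Suc n) < b n"
  shows "summable (\<lambda>i. (-1)^i * b i)" "0 < (\<Sum>i. (-1)^i * b i)" "(\<Sum>i. (-1)^i * b i) < b 0"
proof -
  have L: "summable (\<lambda>i. (-1)^i * c i) \<and> 0 \<le> (\<Sum>i. (-1)^i * c i)"
    if "c \<longlonglongrightarrow> 0" "\<And>n. 0 \<le> c n" "\<And>n. c (Suc n) \<le> c n" for c :: "nat \<Rightarrow> real"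
    using summable_Leibniz'(1)[OF that] summable_Leibniz'(2)[OF that, of 0] by simp
  have l2: "(\<lambda>i. b (i + k)) \<longlonglongrightarrow> 0" for k
    using LIMSEQ_ignore_initial_segment[OF lim] by simp
  have d2: "b (Suc n + k) \<le> b (n + k)" for n k using dec[of "n+k"] by simp
  have p2: "0 \<le> b (n+k)" for n k using pos[of "n+k"] by simp
  from L[OF l2 p2 d2] have Lk: "summable (\<lambda>i. (-1)^i * b (i+k))" "0 \<le> (\<Sum>i. (-1)^i * b (i+k))" for k
    by auto
  show sb: "summable (\<lambda>i. (-1)^i * b i)" using Lk(1)[of 0] by simp
  have "(\<Sum>i. (-1)^i * b i) = (\<Sum>i. (-1)^(i+2) * b (i+2)) + (\<Sum>i<2. (-1)^i * b i)"
    by (rule suminf_split_initial_segment[OF sb])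
  also have "(\<Sum>i. (-1)^(i+2) * b (i+2)) = (\<Sum>i. (-1)^i * b (i+2))"
    by (simp add: power_add)
  finally have e1: "(\<Sum>i. (-1)^i * b i) = (\<Sum>i. (-1)^i * b (i+2)) + b 0 - b 1"
    by (simp add: numeral_2_eq_2)
  show "0 < (\<Sum>i. (-1)^i * b i)" using e1 Lk(2)[of 2] dec[of 0] by simp
  have "(\<Sum>i. (-1)^i * b i) = (\<Sum>i. (-1)^(i+1) * b (i+1)) + (\<Sum>i<1. (-1)^i * b i)"
    by (rule suminf_split_initial_segment[OF sb])
  also have "(\<Sum>i. (-1)^(i+1) * b (i+1)) = - (\<Sum>i. (-1)^i * b (i+1))"
    using Lk(1)[of 1] by (simp add: suminf_minus[symmetric])
  finally have e2: "(\<Sum>i. (-1)^i * b i) = b 0 - (\<Sum>i. (-1)^i * b (i+1))" by simp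
  have "(\<Sum>i. (-1)^i * b (i+1)) = (\<Sum>i. (-1)^(i+2) * b (i+2+1)) + (\<Sum>i<2. (-1)^i * b (i+1))"
    by (rule suminf_split_initial_segment[OF Lk(1)[of 1]])
  also have "(\<Sum>i. (-1)^(i+2) * b (i+2+1)) = (\<Sum>i. (-1)^i * b (i+3))"
    by (simp add: power_add add.assoc numeral_3_eq_3)
  finally have "(\<Sum>i. (-1)^i * b (i+1)) = (\<Sum>i. (-1)^i * b (i+3)) + b 1 - b 2"
    by (simp add: numeral_2_eq_2)
  then have "0 < (\<Sum>i. (-1)^i * b (i+1))" using Lk(2)[of 3] dec[of 1] by (simp add: numeral_2_eq_2)
  then show "(\<Sum>i. (-1)^i * b i) < b 0" using e2 by simp
qed

lemma sin_triple: "sin (3*(x::real)) = 3 * sin x - 4 * sin x ^ 3"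
proof -
  have "sin (3*x) = sin (2*x + x)" by (simp add: algebra_simps)
  also have "\<dots> = 2 * sin x * cos x * cos x + (cos x ^ 2 - sin x ^ 2) * sin x"
    unfolding sin_add sin_double cos_double by simp
  also have "\<dots> = 3 * sin x - 4 * sin x ^ 3"
    unfolding mult.assoc[symmetric, of 2 "sin x" "cos x"] mult.assoc[of "2 * sin x" "cos x" "cos x"]
      power2_eq_square[symmetric, of "cos x"] cos_squared_eq
    by (simp add: power2_eq_square power3_eq_cube algebra_simps)
  finally show ?thesis .
qed

lemma gen0: fixes c y f t q P :: real
  assumes "f \<noteq> 0" "P \<noteq> 0" "q = 4*P+3"
  shows "c/f*y + c/(f*P) * ((3*y - t*y)/4) = -c * ((t - q)/(4*(f*P))) * y"
  using assms by (simp add: field_simps)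

lemma gen: fixes c y f t r x :: real
  assumes "f \<noteq> 0" "x \<noteq> 0" "(2*r+1)*(2*r+2)*(2*r+3) \<noteq> 0"
  shows "c/f*y - (-c)/(f*((2*r+1)*(2*r+2)*(2*r+3))) * (3*(y*x^3) - t*(y*x^3))/4/x^3
     = -c * ((t - 32*r^3-96*r^2-88*r-27)/(4*(f*((2*r+1)*(2*r+2)*(2*r+3))))) * y"
proof -
  have x3: "x^3 \<noteq> 0" using assms by simp
  have Z: "(3*(y*x^3) - t*(y*x^3)) = (3*y - t*y)*x^3" by (simp add: algebra_simps)
  have W: "u * (v*x^3)/4/x^3 = u*(v/4)" for u v using x3 by (simp add: field_simps)
  have "c/f*y - (-c)/(f*((2*r+1)*(2*r+2)*(2*r+3))) * (3*(y*x^3) - t*(y*x^3))/4/x^3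
     = c/f*y + c/(f*((2*r+1)*(2*r+2)*(2*r+3))) * ((3*y - t*y)/4)" unfolding Z W by simp
  also have "\<dots> = -c * ((t - (32*r^3+96*r^2+88*r+27))/(4*(f*((2*r+1)*(2*r+2)*(2*r+3))))) * y"
    by (rule gen0) (use assms in \<open>auto simp: algebra_simps power3_eq_cube power2_eq_square\<close>)
  finally show ?thesis by (simp add: algebra_simps)
qed
lemma fact3: "(fact (2*n+3) :: real) = fact (2*n) * ((2*real n+1)*(2*real n+2)*(2*real n+3))"
proof -
  have "2*n+3 = Suc (Suc (Suc (2*n)))" by simp
  then have "(fact (2*n+3) :: real) = fact (Suc (Suc (Suc (2*n))))" by (simp only:)
  also have "\<dots> = fact (2*n) * ((2*real n+1)*(2*real n+2)*(2*real n+3))"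
    by (simp add: algebra_simps)
  finally show ?thesis .
qed

lemma term_id:
  fixes x :: real assumes "x \<noteq> 0"
  shows "(-1)^n/fact(2*n)*x^(2*n) - (-1)^(Suc n)/fact(2*Suc n +1) * (3*x^(2*Suc n+1) - (3*x)^(2*Suc n + 1))/4 / x^3
     = (-1)^(n+1) * A n * x^(2*n)"
proof -
  have e1: "2*Suc n+1 = 2*n+3" by simp
  have p1: "x^(2*n+3) = x^(2*n)*x^3" by (simp add: power_add)
  have p2: "(3*x)^(2*n+3) = 3^(2*n+3)*(x^(2*n)*x^3)" by (simp add: power_add power_mult_distrib)
  have P: "(2*real n+1)*(2*real n+2)*(2*real n+3) \<noteq> 0" by (simp add: add_pos_pos)
  have s: "(-1::real)^(Suc n) = - ((-1)^n)" "(-1::real)^(n+1) = - ((-1)^n)" by simp_all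
  show ?thesis unfolding e1 p1 p2 A_def fact3 s
    using gen[OF _ assms P, of "fact (2*n)" "(-1)^n" "x^(2*n)" "3^(2*n+3)"] by simp
qed
lemma series_id:
  fixes x :: real assumes x0: "x \<noteq> 0"
  shows "(\<lambda>k. (-1)^(k+1) * A k * x^(2*k)) sums (cos x - (sin x / x)^3)"
proof -
  define h where "h n = (-1)^n/fact(2*n+1) * (3*x^(2*n+1) - (3*x)^(2*n+1))/4 / x^3" for n
  have a: "(\<lambda>n. 3 * ((-1)^n/fact(2*n+1) * x^(2*n+1)) - (-1)^n/fact(2*n+1) * (3*x)^(2*n+1))
      sums (3 * sin x - sin (3*x))"
    by (intro sums_diff sums_mult sin_paired)
  then have "(\<lambda>n. (3 * ((-1)^n/fact(2*n+1) * x^(2*n+1)) - (-1)^n/fact(2*n+1) * (3*x)^(2*n+1))/4/x^3)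
      sums ((3 * sin x - sin (3*x))/4/x^3)"
    by (intro sums_divide)
  moreover have "(3 * sin x - sin (3*x))/4/x^3 = (sin x / x)^3"
    by (simp add: sin_triple power_divide)
  ultimately have "h sums (sin x / x)^3"
    unfolding h_def by (simp add: algebra_simps)
  then have "(\<lambda>n. h (Suc n)) sums (sin x / x)^3"
    by (subst sums_Suc_iff) (simp add: h_def)
  then have "(\<lambda>n. (-1)^n/fact(2*n)*x^(2*n) - h (Suc n)) sums (cos x - (sin x / x)^3)"
    by (intro sums_diff cos_paired)
  then show ?thesis
    unfolding h_def term_id[OF x0] .
qed


definition pp :: "nat \<Rightarrow> nat" where "pp k = 32*k^3 + 96*k^2 + 88*k + 27"

lemma A_pp: "A k = (3^(2*k+3) - real (pp k)) / (4 * fact (2*k+3))"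
  unfolding A_def pp_def by simp

lemma pp_step: "pp (Suc k) \<le> 9 * pp k"
  unfolding pp_def by (simp add: power3_eq_cube power2_eq_square algebra_simps)

lemma pp_bound: "k \<ge> 2 \<Longrightarrow> 2 * pp k \<le> 3^(2*k+3)"
proof (induction k rule: dec_induct)
  case base then show ?case by (simp add: pp_def)
next
  case (step k)
  have "2 * pp (Suc k) \<le> 9 * (2 * pp k)" using pp_step[of k] by simp
  also have "\<dots> \<le> 9 * 3^(2*k+3)" using step.IH by simp
  also have "\<dots> = 3^(2*Suc k+3)" by (simp add: power_add)
  finally show ?case .
qed

lemma pp_bound_real: "k \<ge> 2 \<Longrightarrow> 2 * real (pp k) \<le> 3^(2*k+3)"
proof -
  assume "k \<ge> 2"
  from pp_bound[OF this] have "real (2 * pp k) \<le> real (3^(2*k+3))" by (simp only: of_nat_le_iff)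
  then show ?thesis by simp
qed

lemma pp_pos: "real (pp k) > 0"
proof -
  have "pp k > 0" by (simp add: pp_def)
  then show ?thesis by simp
qed

lemma A_pos: "k \<ge> 2 \<Longrightarrow> A k > 0"
proof -
  assume k: "k \<ge> 2"
  have "real (pp k) < 3^(2*k+3)" using pp_bound_real[OF k] pp_pos[of k] by linarith
  then show ?thesis unfolding A_pp by (intro divide_pos_pos) auto
qed

lemma A01: "A 0 = 0" "A 1 = 0" "A (Suc 0) = 0" by (simp_all add: A_def)

lemma A_dec:
  fixes x :: real
  assumes k: "k \<ge> 2" and x: "0 < x" "x^2 < 4"
  shows "A (Suc k) * x^2 < A k"
proof -
  define T :: real where "T = 3^(2*k+3)"
  define F :: real where "F = fact (2*k+3)"
  define Q :: real where "Q = (2*real k+4)*(2*real k+5)"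
  have F0: "F > 0" unfolding F_def by simp
  have q1: "8 \<le> 2*real k+4" "9 \<le> 2*real k+5" using k by auto
  have "(8::real) * 9 \<le> (2*real k+4)*(2*real k+5)" by (rule mult_mono[OF q1]) auto
  then have Q72: "Q \<ge> 72" unfolding Q_def by simp
  have fS: "(fact (2*Suc k+3) :: real) = F * Q"
  proof -
    have "2*Suc k+3 = Suc (Suc (2*k+3))" by simp
    then have "(fact (2*Suc k+3) :: real) = fact (Suc (Suc (2*k+3)))" by (simp only:)
    also have "\<dots> = fact (2*k+3) * ((2*real k+4)*(2*real k+5))"
      unfolding fact_Suc of_nat_mult by (simp add: algebra_simps)
    also have "\<dots> = F * Q" unfolding F_def Q_def ..
    finally show ?thesis .
  qed
  have TS: "(3::real)^(2*Suc k+3) = 9*T" unfolding T_def by (simp add: power_add)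
  have AS: "A (Suc k) = (9*T - real (pp (Suc k)))/(4*(F*Q))" unfolding A_pp fS TS ..
  have Ak: "A k = (T - real (pp k))/(4*F)" unfolding A_pp T_def F_def ..
  have b1: "2 * real (pp k) \<le> T" unfolding T_def using pp_bound_real[OF k] .
  have b2: "0 \<le> 9*T - real (pp (Suc k))" using pp_bound_real[of "Suc k"] k TS by simp
  have "(9*T - real (pp (Suc k))) * x^2 \<le> (9*T - real (pp (Suc k))) * 4"
    using b2 x by (intro mult_left_mono) auto
  also have "\<dots> < 36 * T" using pp_pos[of "Suc k"] by simp
  also have "\<dots> \<le> (T - real (pp k)) * 72" using b1 by simp
  also have "\<dots> \<le> (T - real (pp k)) * Q" using b1 pp_pos[of k] Q72 by (intro mult_left_mono) auto
  finally have main: "(9*T - real (pp (Suc k))) * x^2 < (T - real (pp k)) * Q" .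
  have Q0: "Q > 0" using Q72 by simp
  have "A (Suc k) * x^2 = ((9*T - real (pp (Suc k))) * x^2) / (4*F*Q)" unfolding AS by (simp add: mult.assoc)
  also have "\<dots> < ((T - real (pp k)) * Q) / (4*F*Q)"
    using main F0 Q0 by (intro divide_strict_right_mono) auto
  also have "\<dots> = A k" unfolding Ak using Q0 by simp
  finally show ?thesis .
qed


lemma tail:
  fixes x :: real
  assumes x: "0 < x" "x < pi/2" and N: "N \<ge> 1"
  shows "\<exists>T. cos x - (sin x / x)^3 - (\<Sum>k<N+1. (-1)^(k+1) * A k * x^(2*k)) = (-1)^N * T
           \<and> 0 < T \<and> T < A (N+1) * x^(2*N+2)"
proof -
  define g where "g k = (-1)^(k+1) * A k * x^(2*k)" for k
  define f where "f = cos x - (sin x / x)^3"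
  have gs: "g sums f" unfolding g_def f_def using series_id[of x] x by simp
  have x2: "x^2 < 4" using x pi_less_4
    by (metis divide_less_eq_numeral1(1) less_trans mult.commute pos2 power_strict_mono zero_le_power2 less_le_not_le
      numeral_Bit0_eq_double power2_eq_square mult_strict_mono' order_less_le)
  define a where "a k = A k * x^(2*k)" for k
  have apos: "a k > 0" if "k \<ge> 2" for k unfolding a_def using A_pos[OF that] x by simp
  have adec: "a (Suc k) < a k" if "k \<ge> 2" for k
  proof -
    have "x^(2*Suc k) = x^2 * x^(2*k)" by (simp add: power2_eq_square)
    then have "a (Suc k) = (A (Suc k) * x^2) * x^(2*k)" unfolding a_def by (simp add: mult_ac)
    also have "\<dots> < A k * x^(2*k)" using A_dec[OF that x(1) x2] x by simp
    finally show ?thesis unfolding a_def .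
  qed
  have "g \<longlonglongrightarrow> 0" using gs summable_LIMSEQ_zero sums_summable by blast
  then have "(\<lambda>k. \<bar>g k\<bar>) \<longlonglongrightarrow> 0" by (simp add: tendsto_rabs_zero_iff)
  moreover have "\<bar>g k\<bar> = \<bar>a k\<bar>" for k unfolding g_def a_def by (simp add: abs_mult)
  ultimately have "(\<lambda>k. \<bar>a k\<bar>) \<longlonglongrightarrow> 0" by simp
  then have a0: "a \<longlonglongrightarrow> 0" by (simp add: tendsto_rabs_zero_iff)
  define b where "b i = a (i + (N+1))" for i
  have b0: "b \<longlonglongrightarrow> 0" unfolding b_def using LIMSEQ_ignore_initial_segment[OF a0] .
  have bpos: "0 < b n" for n unfolding b_def using apos N by simp
  have bdec: "b (Suc n) < b n" for n unfolding b_def using adec[of "n+(N+1)"] N by simp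
  note L = leib_strict[OF b0 bpos bdec]
  define T where "T = (\<Sum>i. (-1)^i * b i)"
  have "(\<lambda>i. (-1)^i * b i) sums T" unfolding T_def using L(1) by (simp add: summable_sums)
  then have s1: "(\<lambda>i. (-1)^N * ((-1)^i * b i)) sums ((-1)^N * T)" by (rule sums_mult)
  have s2: "(\<lambda>i. g (i + (N+1))) sums (f - (\<Sum>i<N+1. g i))" by (rule sums_split_initial_segment[OF gs])
  have "g (i + (N+1)) = (-1)^N * ((-1)^i * b i)" for i
    unfolding g_def b_def a_def by (simp add: power_add mult_ac)
  then have "f - (\<Sum>i<N+1. g i) = (-1)^N * T" using s1 s2 sums_unique2 by auto
  moreover have "T < A (N+1) * x^(2*N+2)" using L(3) unfolding T_def b_def a_def by simp
  ultimately show ?thesis using L(2) unfolding T_def f_def g_def by blast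
qed

lemma sum_shift:
  fixes g :: "nat \<Rightarrow> real" assumes "g 0 = 0" "g 1 = 0" "N \<ge> 1"
  shows "(\<Sum>k=2..N. g k) = (\<Sum>k<N+1. g k)" "(\<Sum>k=1..N. g k) = (\<Sum>k<N+1. g k)"
proof -
  have e: "(\<Sum>k<N+1. g k) = (\<Sum>k=0..N. g k)" by (simp add: atLeast0AtMost lessThan_Suc_atMost)
  also have "\<dots> = g 0 + (\<Sum>k=1..N. g k)" using sum.atLeast_Suc_atMost[of 0 N g] by simp
  finally show s1: "(\<Sum>k=1..N. g k) = (\<Sum>k<N+1. g k)" using assms by simp
  have "(\<Sum>k=1..N. g k) = g 1 + (\<Sum>k=Suc 1..N. g k)" using sum.atLeast_Suc_atMost[of 1 N g] assms by simp
  moreover have e2: "{2..N} = {Suc 1..N}" by (simp only: numeral_2_eq_2 One_nat_def)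
  ultimately show "(\<Sum>k=2..N. g k) = (\<Sum>k<N+1. g k)" unfolding e2 using s1 assms by simp
qed

theorem theorem1:
  shows "(\<forall>(x::real) (n::nat). 0 < x \<and> x < pi/2 \<and> n \<ge> 1 \<longrightarrow>
            (\<Sum>k=2..2*n. (-1)^(k+1) * A k * x^(2*k)) < cos x - (sin x / x)^3 \<and>
            cos x - (sin x / x)^3 < (\<Sum>k=2..2*n+1. (-1)^(k+1) * A k * x^(2*k)))
       \<and> (\<forall>(x::real) (m::nat). 0 < x \<and> x < pi/2 \<and> m \<ge> 1 \<longrightarrow>
            \<bar>cos x - (sin x / x)^3 - (\<Sum>k=1..m. (-1)^(k+1) * A k * x^(2*k))\<bar>
              < A (m+1) * x^(2*m+2))"
proof (intro conjI allI impI)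
  fix x :: real and n :: nat
  assume h: "0 < x \<and> x < pi/2 \<and> n \<ge> 1"
  let ?g = "\<lambda>k. (-1)^(k+1) * A k * x^(2*k)"
  have g01: "?g 0 = 0" "?g 1 = 0" by (simp_all add: A01)
  obtain T where T: "cos x - (sin x / x)^3 - (\<Sum>k<2*n+1. ?g k) = (-1)^(2*n) * T" "0 < T"
    using tail[of x "2*n"] h by auto
  show "(\<Sum>k=2..2*n. ?g k) < cos x - (sin x / x)^3"
    using T sum_shift(1)[of ?g "2*n", OF g01] h by simp
  obtain T' where T': "cos x - (sin x / x)^3 - (\<Sum>k<2*n+1+1. ?g k) = (-1)^(2*n+1) * T'" "0 < T'"
    using tail[of x "2*n+1"] h by auto
  show "cos x - (sin x / x)^3 < (\<Sum>k=2..2*n+1. ?g k)"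
    using T' sum_shift(1)[of ?g "2*n+1", OF g01] h by simp
next
  fix x :: real and m :: nat
  assume h: "0 < x \<and> x < pi/2 \<and> m \<ge> 1"
  let ?g = "\<lambda>k. (-1)^(k+1) * A k * x^(2*k)"
  have g01: "?g 0 = 0" "?g 1 = 0" by (simp_all add: A01)
  obtain T where T: "cos x - (sin x / x)^3 - (\<Sum>k<m+1. ?g k) = (-1)^m * T" "0 < T" "T < A (m+1) * x^(2*m+2)"
    using tail[of x m] h by auto
  have "\<bar>(-1::real)^m * T\<bar> = T" using T(2) by (simp add: abs_mult)
  then show "\<bar>cos x - (sin x / x)^3 - (\<Sum>k=1..m. ?g k)\<bar> < A (m+1) * x^(2*m+2)"
    using T sum_shift(2)[of ?g m, OF g01] h by simp
qed

end
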